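(* Let $T=(V,E)$ be a tree with $\mathrm{pthin}(T)=2$, and let $\sigma$ be an ordering of $V$ and $S=\{V^0,V^1\}$ a partition of $V$ that are strongly consistent. Let $v_0\in V^0$ and $v_1\in V^1$ be adjacent. Let $u$ be a vertex that is before the edge $v_0v_1$ and $w$ a vertex that is after the edge $v_0v_1$. Then every path in $T$ from $u$ to $w$ contains $v_0$ or $v_1$.
   Context: For a graph $G=(V,E)$, a linear ordering $<$ of $V$ and a partition of $V$ into classes are called strongly consistent if for every triple $r<s<t$ of vertices with $rt\in E$: if $r$ and $s$ belong to the same class then $st\in E$, and if $s$ and $t$ belong to the same class then $rs\in E$. The proper thinness $\mathrm{pthin}(G)$ is the minimum $k$ such that some ordering and some partition into $k$ classes are strongly consistent. For adjacent $v_0\in V^0$, $v_1\in V^1$ and a vertex $u\notin\{v_0,v_1\}$: $u$ is before the edge $v_0v_1$ if either ($u\in V^0$ and $u<v_0$) or ($u\in V^1$ and $u<v_1$); $u$ is after the edge $v_0v_1$ if either ($u\in V^0$ and $v_0<u$) or ($u\in V^1$ and $v_1<u$). *)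

theory Defs
  imports Main
begin

definition simple_graph :: "'a set \<Rightarrow> ('a \<Rightarrow> 'a \<Rightarrow> bool) \<Rightarrow> bool" where
  "simple_graph V E \<longleftrightarrow> finite V \<and> (\<forall>x y. E x y \<longrightarrow> x \<in> V \<and> y \<in> V)
     \<and> (\<forall>x y. E x y \<longrightarrow> E y x) \<and> (\<forall>x. \<not> E x x)"

definition is_walk :: "'a set \<Rightarrow> ('a \<Rightarrow> 'a \<Rightarrow> bool) \<Rightarrow> 'a list \<Rightarrow> bool" where
  "is_walk V E xs \<longleftrightarrow> xs \<noteq> [] \<and> set xs \<subseteq> V \<and>
     (\<forall>i. Suc i < length xs \<longrightarrow> E (xs ! i) (xs ! Suc i))"

definition is_path :: "'a set \<Rightarrow> ('a \<Rightarrow> 'a \<Rightarrow> bool) \<Rightarrow> 'a list \<Rightarrow> bool" where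
  "is_path V E xs \<longleftrightarrow> is_walk V E xs \<and> distinct xs"

definition connected_graph :: "'a set \<Rightarrow> ('a \<Rightarrow> 'a \<Rightarrow> bool) \<Rightarrow> bool" where
  "connected_graph V E \<longleftrightarrow> V \<noteq> {} \<and>
     (\<forall>x\<in>V. \<forall>y\<in>V. \<exists>xs. is_path V E xs \<and> hd xs = x \<and> last xs = y)"

definition acyclic_graph :: "'a set \<Rightarrow> ('a \<Rightarrow> 'a \<Rightarrow> bool) \<Rightarrow> bool" where
  "acyclic_graph V E \<longleftrightarrow>
     \<not> (\<exists>xs. is_path V E xs \<and> length xs \<ge> 3 \<and> E (last xs) (hd xs))"

definition is_tree :: "'a set \<Rightarrow> ('a \<Rightarrow> 'a \<Rightarrow> bool) \<Rightarrow> bool" where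
  "is_tree V E \<longleftrightarrow> simple_graph V E \<and> connected_graph V E \<and> acyclic_graph V E"

text \<open>A linear ordering of V is represented by an injective numbering
  ord :: 'a \<Rightarrow> nat on V; x < y iff ord x < ord y.\<close>
definition is_partition :: "'a set \<Rightarrow> 'a set set \<Rightarrow> bool" where
  "is_partition V P \<longleftrightarrow> (\<forall>X\<in>P. X \<noteq> {}) \<and> \<Union>P = V \<and>
     (\<forall>X\<in>P. \<forall>Y\<in>P. X \<noteq> Y \<longrightarrow> X \<inter> Y = {})"

definition same_class :: "'a set set \<Rightarrow> 'a \<Rightarrow> 'a \<Rightarrow> bool" where
  "same_class P x y \<longleftrightarrow> (\<exists>X\<in>P. x \<in> X \<and> y \<in> X)"

definition strongly_consistent ::
  "'a set \<Rightarrow> ('a \<Rightarrow> 'a \<Rightarrow> bool) \<Rightarrow> ('a \<Rightarrow> nat) \<Rightarrow> 'a set set \<Rightarrow> bool" where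
  "strongly_consistent V E ord P \<longleftrightarrow>
     (\<forall>r\<in>V. \<forall>s\<in>V. \<forall>t\<in>V. ord r < ord s \<and> ord s < ord t \<and> E r t \<longrightarrow>
        (same_class P r s \<longrightarrow> E s t) \<and> (same_class P s t \<longrightarrow> E r s))"

definition pthin :: "'a set \<Rightarrow> ('a \<Rightarrow> 'a \<Rightarrow> bool) \<Rightarrow> nat" where
  "pthin V E = (LEAST k. \<exists>ord P. inj_on ord V \<and> is_partition V P \<and> card P = k
                           \<and> strongly_consistent V E ord P)"

definition before_edge ::
  "('a \<Rightarrow> nat) \<Rightarrow> 'a set \<Rightarrow> 'a set \<Rightarrow> 'a \<Rightarrow> 'a \<Rightarrow> 'a \<Rightarrow> bool" where
  "before_edge ord V0 V1 v0 v1 u \<longleftrightarrow> u \<notin> {v0, v1} \<and>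
     ((u \<in> V0 \<and> ord u < ord v0) \<or> (u \<in> V1 \<and> ord u < ord v1))"

definition after_edge ::
  "('a \<Rightarrow> nat) \<Rightarrow> 'a set \<Rightarrow> 'a set \<Rightarrow> 'a \<Rightarrow> 'a \<Rightarrow> 'a \<Rightarrow> bool" where
  "after_edge ord V0 V1 v0 v1 u \<longleftrightarrow> u \<notin> {v0, v1} \<and>
     ((u \<in> V0 \<and> ord v0 < ord u) \<or> (u \<in> V1 \<and> ord v1 < ord u))"

end

theory Submission
  imports Defs
begin

lemma cyc3:
  assumes "acyclic_graph V E" "x \<in> V" "y \<in> V" "z \<in> V" "distinct [x,y,z]"
    "E x y" "E y z" "E z x"
  shows False
proof -
  have "is_path V E [x,y,z]"
    unfolding is_path_def is_walk_def using assms
    by (auto simp: less_Suc_eq nth_Cons split: nat.splits)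
  then show False using assms(1,8) unfolding acyclic_graph_def by force
qed

lemma cyc4:
  assumes "acyclic_graph V E" "x \<in> V" "y \<in> V" "z \<in> V" "t \<in> V" "distinct [x,y,z,t]"
    "E x y" "E y z" "E z t" "E t x"
  shows False
proof -
  have "is_path V E [x,y,z,t]"
    unfolding is_path_def is_walk_def using assms
    by (auto simp: less_Suc_eq nth_Cons split: nat.splits)
  then show False using assms(1,10) unfolding acyclic_graph_def by force
qed

lemma trans_step:
  "xs \<noteq> [] \<Longrightarrow> P (hd xs) \<Longrightarrow> \<not> P (last xs) \<Longrightarrow>
   \<exists>i. Suc i < length xs \<and> P (xs!i) \<and> \<not> P (xs ! Suc i)"
proof (induction xs)
  case Nil then show ?case by simp
next
  case (Cons x xs)
  show ?case
  proof (cases "xs = []")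
    case True then show ?thesis using Cons by simp
  next
    case False
    show ?thesis
    proof (cases "P (hd xs)")
      case True
      then obtain i where "Suc i < length xs \<and> P (xs!i) \<and> \<not> P (xs ! Suc i)"
        using Cons False by auto
      then show ?thesis by (intro exI[of _ "Suc i"]) auto
    next
      case f: False
      then show ?thesis using Cons False
        by (intro exI[of _ 0]) (auto simp: hd_conv_nth)
    qed
  qed
qed

lemma sc_use:
  assumes "strongly_consistent V E ord P" "r \<in> V" "s \<in> V" "t \<in> V"
    "ord r < ord s" "ord s < ord t" "E r t"
  shows "(same_class P r s \<longrightarrow> E s t) \<and> (same_class P s t \<longrightarrow> E r s)"
  using assms unfolding strongly_consistent_def by blast

lemma mixed:
  assumes sg: "simple_graph V E" and ac: "acyclic_graph V E" and inj: "inj_on ord V"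
    and sc: "strongly_consistent V E ord {X, Y}" and dj: "X \<inter> Y = {}"
    and "v0 \<in> X" "v1 \<in> Y" "v0 \<in> V" "v1 \<in> V" "E v0 v1"
    and "a \<in> X" "b \<in> Y" "a \<in> V" "b \<in> V" "ord a < ord v0" "ord v1 < ord b"
    and "E a b"
  shows False
proof -
  have sym: "\<And>x y. E x y \<Longrightarrow> E y x" using sg unfolding simple_graph_def by blast
  have ne: "a \<noteq> v1" "b \<noteq> v0" "a \<noteq> b" using dj assms by auto
  have sc1: "same_class {X,Y} v1 b" "same_class {X,Y} a v0" "same_class {X,Y} b v1"
     "same_class {X,Y} v0 a"
    using assms unfolding same_class_def by auto
  have Eav1: "E a v1"
  proof (cases "ord a < ord v1")
    case True
    then show ?thesis using sc_use[OF sc, of a v1 b] assms sc1 by blast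
  next
    case False
    then have "ord v1 < ord a" using inj ne assms by (metis inj_on_def linorder_neqE_nat)
    then have "E v1 a" using sc_use[OF sc, of v1 a v0] assms sc1 sym by blast
    then show ?thesis using sym by blast
  qed
  have Ev0b: "E v0 b"
  proof (cases "ord v0 < ord b")
    case True
    then show ?thesis using sc_use[OF sc, of a v0 b] assms sc1 by blast
  next
    case False
    then have "ord b < ord v0" using inj ne assms by (metis inj_on_def linorder_neqE_nat)
    then have "E b v0" using sc_use[OF sc, of v1 b v0] assms sc1 sym by blast
    then show ?thesis using sym by blast
  qed
  have "v0 \<noteq> v1" using dj assms by auto
  then show False
    using cyc4[OF ac, of a v1 v0 b] assms ne Eav1 Ev0b sym by auto
qed

lemma same:
  assumes sg: "simple_graph V E" and ac: "acyclic_graph V E"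
    and sc: "strongly_consistent V E ord {X, Y}"
    and "v0 \<in> X" "v0 \<in> V"
    and "a \<in> X" "b \<in> X" "a \<in> V" "b \<in> V" "ord a < ord v0" "ord v0 < ord b"
    and "E a b"
  shows False
proof -
  have sym: "\<And>x y. E x y \<Longrightarrow> E y x" using sg unfolding simple_graph_def by blast
  have sc1: "same_class {X,Y} a v0" "same_class {X,Y} v0 b"
    using assms unfolding same_class_def by auto
  have "E v0 b" "E a v0" using sc_use[OF sc, of a v0 b] assms sc1 by auto
  moreover have "a \<noteq> v0" "v0 \<noteq> b" "a \<noteq> b" using assms by auto
  ultimately show False using cyc3[OF ac, of a v0 b] assms sym by auto
qed

theorem propositionA4:
  fixes V :: "'a set" and E :: "'a \<Rightarrow> 'a \<Rightarrow> bool" and ord :: "'a \<Rightarrow> nat"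
    and V0 V1 :: "'a set" and v0 v1 u w :: 'a and xs :: "'a list"
  assumes tree: "is_tree V E"
    and pthin2: "pthin V E = 2"
    and ord: "inj_on ord V"
    and part: "is_partition V {V0, V1}" and distinct_classes: "V0 \<noteq> V1"
    and sc: "strongly_consistent V E ord {V0, V1}"
    and v0: "v0 \<in> V0" and v1: "v1 \<in> V1" and adj: "E v0 v1"
    and u: "before_edge ord V0 V1 v0 v1 u"
    and w: "after_edge ord V0 V1 v0 v1 w"
    and path: "is_path V E xs" and start: "hd xs = u" and finish: "last xs = w"
  shows "v0 \<in> set xs \<or> v1 \<in> set xs"
proof (rule ccontr)
  assume nv: "\<not> (v0 \<in> set xs \<or> v1 \<in> set xs)"
  have sg: "simple_graph V E" and ac: "acyclic_graph V E" using tree is_tree_def by auto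
  have sym: "\<And>x y. E x y \<Longrightarrow> E y x" using sg unfolding simple_graph_def by blast
  have UV: "V = V0 \<union> V1" and dj: "V0 \<inter> V1 = {}"
    using part distinct_classes unfolding is_partition_def by auto
  have sc': "strongly_consistent V E ord {V1, V0}" using sc by (simp add: insert_commute)
  have wk: "xs \<noteq> []" "set xs \<subseteq> V" "\<And>i. Suc i < length xs \<Longrightarrow> E (xs ! i) (xs ! Suc i)"
    using path unfolding is_path_def is_walk_def by auto
  have nb: "\<not> before_edge ord V0 V1 v0 v1 w" using w dj unfolding before_edge_def after_edge_def
    by auto
  obtain i where i: "Suc i < length xs" "before_edge ord V0 V1 v0 v1 (xs!i)"
    "\<not> before_edge ord V0 V1 v0 v1 (xs ! Suc i)"
    using trans_step[of xs "before_edge ord V0 V1 v0 v1"] wk start finish u nb by auto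
  define a where "a = xs ! i"
  define b where "b = xs ! Suc i"
  have aV: "a \<in> V" and bV: "b \<in> V" using wk i unfolding a_def b_def
    by (meson Suc_lessD nth_mem subsetD)+
  have anv: "a \<noteq> v0" "a \<noteq> v1" "b \<noteq> v0" "b \<noteq> v1" using nv i unfolding a_def b_def
    by (metis Suc_lessD nth_mem)+
  have Eab: "E a b" using wk i unfolding a_def b_def by auto
  have v0V: "v0 \<in> V" "v1 \<in> V" using UV v0 v1 by auto
  have ba: "(a \<in> V0 \<and> ord a < ord v0) \<or> (a \<in> V1 \<and> ord a < ord v1)"
    using i(2) unfolding a_def before_edge_def by auto
  have bb: "(b \<in> V0 \<and> ord v0 < ord b) \<or> (b \<in> V1 \<and> ord v1 < ord b)"
  proof -
    have "\<not> ((b \<in> V0 \<and> ord b < ord v0) \<or> (b \<in> V1 \<and> ord b < ord v1))"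
      using i(3) anv unfolding b_def before_edge_def by auto
    moreover have "ord b \<noteq> ord v0" "ord b \<noteq> ord v1"
      using ord anv bV v0V by (meson inj_on_def)+
    ultimately show ?thesis using bV UV by auto
  qed
  from ba bb show False
  proof (elim disjE conjE)
    assume "a \<in> V0" "ord a < ord v0" "b \<in> V0" "ord v0 < ord b"
    then show False using same[OF sg ac sc v0 _ _ _ aV bV _ _ Eab] v0V by auto
  next
    assume "a \<in> V1" "ord a < ord v1" "b \<in> V1" "ord v1 < ord b"
    then show False using same[OF sg ac sc' v1 _ _ _ aV bV _ _ Eab] v0V by auto
  next
    assume "a \<in> V0" "ord a < ord v0" "b \<in> V1" "ord v1 < ord b"
    then show False using mixed[OF sg ac ord sc dj v0 v1 _ _ adj _ _ aV bV _ _ Eab] v0V by auto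
  next
    assume "a \<in> V1" "ord a < ord v1" "b \<in> V0" "ord v0 < ord b"
    moreover have "V1 \<inter> V0 = {}" using dj by auto
    ultimately show False
      using mixed[OF sg ac ord sc' _ v1 v0 _ _ _ _ _ aV bV _ _ Eab] v0V sym adj by auto
  qed
qed

end
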